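(* Consider the P-SSD algorithm described in the context, executed over a constant (time-invariant) digraph $G$, and let $C_{\mathrm{SSD}}=\mathrm{SSD}(D(X),D(Y))$. Let $i$ be a globally reachable node of $G$ and define $l=\max_{j\in\{1,\dots,M\}}\mathrm{dist}(j,i)$. Then $\mathcal{R}(C_k^i)=\mathcal{R}(C_{\mathrm{SSD}})$ for all $k\ge l+1$.
   Context: Data setting: a map $T:\mathcal{M}\to\mathcal{M}$, $\mathcal{M}\subseteq\mathbb{R}^n$; a dictionary $D(x)=[d_1(x),\dots,d_{N_d}(x)]$ of real-valued functions on $\mathcal{M}$; data matrices $X,Y\in\mathbb{R}^{N\times n}$ whose $i$-th rows $x_i^T,y_i^T$ satisfy $y_i=T(x_i)$; $D(X)\in\mathbb{R}^{N\times N_d}$ is the matrix with rows $D(x_1),\dots,D(x_N)$ (similarly $D(Y)$). Assumption: $D(X)$ and $D(Y)$ have full column rank. There are $M$ agents; agent $i$ holds local dictionary snapshots $D(X_i),D(Y_i)$ (obtained from a subset of the snapshot pairs) such that the union over $i$ of the rows of $[D(X_i),D(Y_i)]$ equals the set of rows of $[D(X),D(Y)]$. There are signature matrices $D(X_s),D(Y_s)$ with full column rank such that the rows of $[D(X_s),D(Y_s)]$ are contained in the rows of $[D(X_i),D(Y_i)]$ for every $i$. SSD algorithm: given $A,B\in\mathbb{R}^{m\times q}$, set $A_1=A$, $B_1=B$, $C=I_q$, and iterate: let $[Z^A_j;Z^B_j]$ be a matrix whose columns form a basis of the null space of $[A_j,B_j]$ (with $Z^A_j$ having as many rows as $A_j$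 has columns); if the null space is trivial return $0$; if the number of rows of $Z^A_j$ is at most its number of columns, return $C$; otherwise set $C\leftarrow CZ^A_j$, $A_{j+1}=A_jZ^A_j$, $B_{j+1}=B_jZ^A_j$. Its output is denoted $\mathrm{SSD}(A,B)$. P-SSD algorithm: at iteration $k\ge1$ the digraph $G_k$ is used; an edge $(j,i)\in E_k$ means $j$ is an in-neighbor of $i$, and $\mathcal{N}_{\mathrm{in}}^k(i)$ denotes the in-neighbors of $i$ in $G_k$. Each agent $i$ sets $C_0^i=I_{N_d}$, $\mathrm{flag}_0^i=0$, and for $k=1,2,\dots$: receives $C_{k-1}^j$ for $j\in\mathcal{N}_{\mathrm{in}}^k(i)$; sets $D_k^i=\mathrm{basis}\big(\bigcap_{j\in\{i\}\cup\mathcal{N}_{\mathrm{in}}^k(i)}\mathcal{R}(C_{k-1}^j)\big)$; sets $E_k^i=\mathrm{SSD}(D(X_i)D_k^i,D(Y_i)D_k^i)$; if the number of columns of $D_k^iE_k^i$ is strictly less than that of $C_{k-1}^i$, sets $C_k^i=D_k^iE_k^i$ and $\mathrm{flag}_k^i=0$; otherwise sets $C_k^i=C_{k-1}^i$ and $\mathrm{flag}_k^i=1$; then transmits $C_k^i$ to its out-neighbors. Here $\mathrm{basis}(\mathcal{A})$ returns a matrix whose columns form a basis of the subspace $\mathcal{A}$, and returns $0$ if $\mathcal{A}=\{0\}$; the matrix $0$ is regarded as having $0$ columns. $\mathcal{R}(\cdot)$ denotes range space. A node is globally reachable if there is a directed path from every other node to it; $\mathrm{dist}(j,i)$ is the length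 of a shortest directed path from $j$ to $i$ (with $\mathrm{dist}(i,i)=0$). *)

theory Defs
  imports "Jordan_Normal_Form.Matrix_Kernel"
begin

definition colspace :: "real mat \<Rightarrow> real vec set" where
  "colspace A = {A *\<^sub>v x | x. x \<in> carrier_vec (dim_col A)}"

definition full_col_rank :: "real mat \<Rightarrow> bool" where
  "full_col_rank A \<longleftrightarrow>
     (\<forall>x \<in> carrier_vec (dim_col A). A *\<^sub>v x = 0\<^sub>v (dim_row A) \<longrightarrow> x = 0\<^sub>v (dim_col A))"

(* the columns of Z (Z has n rows) form a basis of the subspace S of R^n;
   a matrix with 0 columns is the basis of {0} (the convention "basis({0}) = 0") *)
definition is_basis_mat :: "nat \<Rightarrow> real mat \<Rightarrow> real vec set \<Rightarrow> bool" where
  "is_basis_mat n Z S \<longleftrightarrow> dim_row Z = n \<and> colspace Z = S \<and> full_col_rank Z"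

definition hcat :: "real mat \<Rightarrow> real mat \<Rightarrow> real mat" where
  "hcat A B = mat (dim_row A) (dim_col A + dim_col B)
      (\<lambda>(r, c). if c < dim_col A then A $$ (r, c) else B $$ (r, c - dim_col A))"

definition top_rows :: "nat \<Rightarrow> real mat \<Rightarrow> real mat" where
  "top_rows q Z = mat q (dim_col Z) (\<lambda>(r, c). Z $$ (r, c))"

(* ssd_loop A B C R: starting from the current (A_j, B_j) with accumulated matrix C,
   the SSD iteration (with any admissible choice of null-space bases) may return R. *)
inductive ssd_loop :: "real mat \<Rightarrow> real mat \<Rightarrow> real mat \<Rightarrow> real mat \<Rightarrow> bool" where
  trivial: "mat_kernel (hcat A B) = {0\<^sub>v (dim_col A + dim_col B)} \<Longrightarrow>
            ssd_loop A B C (0\<^sub>m (dim_row C) 0)"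
| stop: "mat_kernel (hcat A B) \<noteq> {0\<^sub>v (dim_col A + dim_col B)} \<Longrightarrow>
         is_basis_mat (dim_col A + dim_col B) Z (mat_kernel (hcat A B)) \<Longrightarrow>
         dim_col A \<le> dim_col Z \<Longrightarrow>
         ssd_loop A B C C"
| step: "mat_kernel (hcat A B) \<noteq> {0\<^sub>v (dim_col A + dim_col B)} \<Longrightarrow>
         is_basis_mat (dim_col A + dim_col B) Z (mat_kernel (hcat A B)) \<Longrightarrow>
         \<not> dim_col A \<le> dim_col Z \<Longrightarrow>
         ssd_loop (A * top_rows (dim_col A) Z) (B * top_rows (dim_col A) Z)
                  (C * top_rows (dim_col A) Z) R \<Longrightarrow>
         ssd_loop A B C R"

definition ssd :: "real mat \<Rightarrow> real mat \<Rightarrow> real mat \<Rightarrow> bool" where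
  "ssd A B R \<longleftrightarrow> ssd_loop A B (1\<^sub>m (dim_col A)) R"

definition row_pairs :: "real mat \<Rightarrow> real mat \<Rightarrow> (real vec \<times> real vec) set" where
  "row_pairs A B = {(row A r, row B r) | r. r < dim_row A}"

(* constant digraph on agents {0..<M}: E j i means (j,i) is an edge, i.e. j is an in-neighbour of i *)
definition edge_rel :: "nat \<Rightarrow> (nat \<Rightarrow> nat \<Rightarrow> bool) \<Rightarrow> (nat \<times> nat) set" where
  "edge_rel M E = {(j, i). j < M \<and> i < M \<and> E j i}"

definition in_nbrs :: "nat \<Rightarrow> (nat \<Rightarrow> nat \<Rightarrow> bool) \<Rightarrow> nat \<Rightarrow> nat set" where
  "in_nbrs M E i = {j. j < M \<and> E j i}"

definition globally_reachable :: "nat \<Rightarrow> (nat \<Rightarrow> nat \<Rightarrow> bool) \<Rightarrow> nat \<Rightarrow> bool" where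
  "globally_reachable M E i \<longleftrightarrow> i < M \<and> (\<forall>j < M. (j, i) \<in> (edge_rel M E)\<^sup>*)"

definition dist :: "nat \<Rightarrow> (nat \<Rightarrow> nat \<Rightarrow> bool) \<Rightarrow> nat \<Rightarrow> nat \<Rightarrow> nat" where
  "dist M E j i = (LEAST n. (j, i) \<in> (edge_rel M E) ^^ n)"

(* C is an execution of P-SSD over the constant digraph E (C k i = C_k^i), with any admissible
   choice of bases and SSD outputs.  Agent i holds DXl i, DYl i.  The flags do not affect C. *)
definition pssd_run :: "nat \<Rightarrow> nat \<Rightarrow> (nat \<Rightarrow> nat \<Rightarrow> bool) \<Rightarrow> (nat \<Rightarrow> real mat) \<Rightarrow> (nat \<Rightarrow> real mat)
                        \<Rightarrow> (nat \<Rightarrow> nat \<Rightarrow> real mat) \<Rightarrow> bool" where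
  "pssd_run Nd M E DXl DYl C \<longleftrightarrow>
     (\<forall>i < M. C 0 i = 1\<^sub>m Nd) \<and>
     (\<forall>k i. k \<ge> 1 \<longrightarrow> i < M \<longrightarrow>
        (\<exists>Dk Ek. is_basis_mat Nd Dk (\<Inter>j \<in> insert i (in_nbrs M E i). colspace (C (k - 1) j)) \<and>
                 ssd (DXl i * Dk) (DYl i * Dk) Ek \<and>
                 C k i = (if dim_col (Dk * Ek) < dim_col (C (k - 1) i) then Dk * Ek
                          else C (k - 1) i)))"

end

theory Submission
  imports Defs
begin


lemma fcr_D: "full_col_rank A \<Longrightarrow> x \<in> carrier_vec (dim_col A) \<Longrightarrow> A *\<^sub>v x = 0\<^sub>v (dim_row A) \<Longrightarrow> x = 0\<^sub>v (dim_col A)"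
  unfolding full_col_rank_def by auto

lemma wide_not_fcr:
  fixes Q :: "real mat"
  assumes Q: "Q \<in> carrier_mat q r" and lt: "q < r" and f: "full_col_rank Q"
  shows False
proof -
  define Q' where "Q' = mat r r (\<lambda>(a,b). if a < q then Q $$ (a,b) else 0)"
  have Q'c: "Q' \<in> carrier_mat r r" unfolding Q'_def by auto
  have rowz: "row Q' (r - 1) = 0\<^sub>v r" using lt unfolding Q'_def by (auto simp: row_def)
  have z: "\<And>j. j < r \<Longrightarrow> Q' $$ (r - 1, j) = 0" using lt unfolding Q'_def by auto
  have "Q' = mat\<^sub>r r r (\<lambda>i. if i = r - 1 then 0\<^sub>v r else row Q' i)"
    apply (rule eq_matI) using Q'c z by (auto simp: mat_of_rows_def)
  hence "det Q' = 0"
    using det_row_0[of "r - 1" r "\<lambda>i. row Q' i"] lt Q'c by auto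
  then obtain v where v: "v \<in> carrier_vec r" "v \<noteq> 0\<^sub>v r" "Q' *\<^sub>v v = 0\<^sub>v r"
    using det_0_iff_vec_prod_zero[OF Q'c] by auto
  have "Q *\<^sub>v v = 0\<^sub>v q"
  proof (rule eq_vecI)
    fix a assume "a < dim_vec (0\<^sub>v q :: real vec)"
    hence a: "a < q" by auto
    have "(Q' *\<^sub>v v) $ a = 0" using v(3) a lt by auto
    moreover have "(Q' *\<^sub>v v) $ a = (Q *\<^sub>v v) $ a"
      using a lt Q Q'c v(1) unfolding Q'_def by (auto simp: row_def scalar_prod_def)
    ultimately show "(Q *\<^sub>v v) $ a = 0\<^sub>v q $ a" using a by auto
  qed (use Q in auto)
  thus False using fcr_D[OF f] v Q by auto
qed

lemma fcr_surj:
  fixes Q :: "real mat"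
  assumes Q: "Q \<in> carrier_mat q r" and le: "q \<le> r" and f: "full_col_rank Q"
    and x: "x \<in> carrier_vec q"
  shows "\<exists>u \<in> carrier_vec r. Q *\<^sub>v u = x"
proof -
  have qr: "q = r" using wide_not_fcr[OF Q _ f] le by force
  have Qc: "Q \<in> carrier_mat q q" using Q qr by auto
  have "det Q \<noteq> 0"
  proof
    assume "det Q = 0"
    then obtain v where "v \<in> carrier_vec q" "v \<noteq> 0\<^sub>v q" "Q *\<^sub>v v = 0\<^sub>v q"
      using det_0_iff_vec_prod_zero[OF Qc] by auto
    thus False using fcr_D[OF f] Q qr by auto
  qed
  from det_non_zero_imp_unit[OF Qc this]
  obtain P where P: "P \<in> carrier_mat q q" "Q * P = 1\<^sub>m q"
    unfolding Units_def ring_mat_def by auto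
  have "Q *\<^sub>v (P *\<^sub>v x) = x"
    using P Qc x by (metis assoc_mult_mat_vec one_mult_mat_vec)
  thus ?thesis using P x qr by (intro bexI[of _ "P *\<^sub>v x"]) auto
qed


lemma colspace_mult_sub:
  assumes A: "A \<in> carrier_mat n p" and B: "B \<in> carrier_mat p q"
  shows "colspace (A * B) \<subseteq> colspace A"
proof
  fix v assume "v \<in> colspace (A * B)"
  then obtain x where x: "x \<in> carrier_vec q" "v = (A * B) *\<^sub>v x" using A B unfolding colspace_def by auto
  hence "v = A *\<^sub>v (B *\<^sub>v x)" using A B by auto
  thus "v \<in> colspace A" using A B x unfolding colspace_def by force
qed

lemma colspace_zero_cols: "colspace (0\<^sub>m n 0 :: real mat) = {0\<^sub>v n}"
proof -
  have "0\<^sub>m n 0 *\<^sub>v (0\<^sub>v 0) = (0\<^sub>v n :: real vec)" by (rule eq_vecI) (auto simp: scalar_prod_def)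
  moreover have "\<And>x. x \<in> carrier_vec 0 \<Longrightarrow> x = 0\<^sub>v 0" by auto
  ultimately show ?thesis unfolding colspace_def by (auto intro!: exI[of _ "0\<^sub>v 0"])
qed

lemma colspace_carrier: "A \<in> carrier_mat n p \<Longrightarrow> colspace A \<subseteq> carrier_vec n"
  unfolding colspace_def by auto

lemma fcr_mult:
  fixes A B :: "real mat"
  assumes A: "A \<in> carrier_mat n p" and B: "B \<in> carrier_mat p q"
   and fA: "full_col_rank A" and fB: "full_col_rank B"
  shows "full_col_rank (A * B)"
  unfolding full_col_rank_def
proof (intro ballI impI)
  fix x assume x: "x \<in> carrier_vec (dim_col (A * B))" and e: "A * B *\<^sub>v x = 0\<^sub>v (dim_row (A * B))"
  have "A *\<^sub>v (B *\<^sub>v x) = 0\<^sub>v (dim_row A)" using e A B x by auto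
  hence "B *\<^sub>v x = 0\<^sub>v (dim_row B)" using fcr_D[OF fA, of "B *\<^sub>v x"] A B x by auto
  thus "x = 0\<^sub>v (dim_col (A * B))" using fcr_D[OF fB, of x] A B x by auto
qed

lemma colspace_eq_dim:
  fixes M1 M2 :: "real mat"
  assumes M1: "M1 \<in> carrier_mat n p" and M2: "M2 \<in> carrier_mat n q"
    and f1: "full_col_rank M1" and f2: "full_col_rank M2"
    and sub: "colspace M1 \<subseteq> colspace M2" and le: "q \<le> p"
  shows "colspace M2 \<subseteq> colspace M1"
proof -
  have "\<forall>c < p. \<exists>x. x \<in> carrier_vec q \<and> M2 *\<^sub>v x = col M1 c"
  proof (intro allI impI)
    fix c assume c: "c < p"
    have "col M1 c = M1 *\<^sub>v unit_vec p c" by (rule eq_vecI) (use M1 c in auto)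
    hence "col M1 c \<in> colspace M1" using M1 unit_vec_carrier[of p c] unfolding colspace_def by blast
    with sub have "col M1 c \<in> colspace M2" by auto
    thus "\<exists>x. x \<in> carrier_vec q \<and> M2 *\<^sub>v x = col M1 c" using M2 unfolding colspace_def by force
  qed
  then obtain xs where xs: "\<And>c. c < p \<Longrightarrow> xs c \<in> carrier_vec q \<and> M2 *\<^sub>v xs c = col M1 c"
    by metis
  define X where "X = mat q p (\<lambda>(a, c). xs c $ a)"
  have Xc: "X \<in> carrier_mat q p" unfolding X_def by auto
  have colX: "\<And>c. c < p \<Longrightarrow> col X c = xs c"
  proof -
    fix c assume c: "c < p"
    show "col X c = xs c"
    proof -
      have "xs c \<in> carrier_vec q" using xs c by auto
      hence d: "dim_vec (xs c) = q" by auto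
      show ?thesis unfolding col_def X_def using c d by (intro eq_vecI) simp_all
    qed
  qed
  have MX: "M2 * X = M1"
  proof (rule mat_col_eqI)
    fix c assume "c < dim_col M1"
    hence c: "c < p" using M1 by auto
    have "col (M2 * X) c = M2 *\<^sub>v col X c" using col_mult2[OF M2 Xc c] .
    also have "\<dots> = col M1 c" using colX[OF c] xs[OF c] by simp
    finally show "col (M2 * X) c = col M1 c" .
  qed (use M1 M2 Xc in auto)
  have fX: "full_col_rank X"
    unfolding full_col_rank_def
  proof (intro ballI impI)
    fix u assume u: "u \<in> carrier_vec (dim_col X)" and e: "X *\<^sub>v u = 0\<^sub>v (dim_row X)"
    have u': "u \<in> carrier_vec p" using u Xc by auto
    have "M1 *\<^sub>v u = M2 *\<^sub>v (X *\<^sub>v u)" unfolding MX[symmetric] using assoc_mult_mat_vec[OF M2 Xc u'] .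
    also have "\<dots> = 0\<^sub>v n" using e M2 Xc by auto
    finally show "u = 0\<^sub>v (dim_col X)" using fcr_D[OF f1, of u] M1 Xc u by auto
  qed
  show ?thesis
  proof
    fix y assume "y \<in> colspace M2"
    then obtain z where z: "z \<in> carrier_vec q" "y = M2 *\<^sub>v z" using M2 unfolding colspace_def by auto
    obtain u where u: "u \<in> carrier_vec p" "X *\<^sub>v u = z" using fcr_surj[OF Xc le fX z(1)] by auto
    have "y = M1 *\<^sub>v u" unfolding MX[symmetric] using assoc_mult_mat_vec[OF M2 Xc u(1)] z u by simp
    thus "y \<in> colspace M1" using u M1 unfolding colspace_def by auto
  qed
qed

definition vfst :: "nat \<Rightarrow> real vec \<Rightarrow> real vec" where "vfst p z = vec p (\<lambda>i. z $ i)"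
definition vsnd :: "nat \<Rightarrow> nat \<Rightarrow> real vec \<Rightarrow> real vec" where "vsnd p q z = vec q (\<lambda>i. z $ (p + i))"
definition vapp :: "nat \<Rightarrow> nat \<Rightarrow> real vec \<Rightarrow> real vec \<Rightarrow> real vec" where
  "vapp p q x y = vec (p + q) (\<lambda>i. if i < p then x $ i else y $ (i - p))"

lemma vfst_carrier[simp]: "vfst p z \<in> carrier_vec p" unfolding vfst_def by auto
lemma vsnd_carrier[simp]: "vsnd p q z \<in> carrier_vec q" unfolding vsnd_def by auto
lemma vapp_carrier[simp]: "vapp p q x y \<in> carrier_vec (p + q)" unfolding vapp_def by auto
lemma vfst_vapp[simp]: "x \<in> carrier_vec p \<Longrightarrow> vfst p (vapp p q x y) = x"
  unfolding vfst_def vapp_def by auto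
lemma vsnd_vapp[simp]: "y \<in> carrier_vec q \<Longrightarrow> vsnd p q (vapp p q x y) = y"
  unfolding vsnd_def vapp_def by auto
lemma vapp_zero: "vapp p q (0\<^sub>v p) (0\<^sub>v q) = 0\<^sub>v (p + q)"
  unfolding vapp_def by auto
lemma vec_split_zero:
  assumes "z \<in> carrier_vec (p + q)" "vfst p z = 0\<^sub>v p" "vsnd p q z = 0\<^sub>v q"
  shows "z = 0\<^sub>v (p + q)"
proof (rule eq_vecI)
  fix i assume "i < dim_vec (0\<^sub>v (p + q) :: real vec)"
  hence i: "i < p + q" by auto
  show "z $ i = 0\<^sub>v (p + q) $ i"
  proof (cases "i < p")
    case True
    have "vfst p z $ i = 0" using assms(2) True by auto
    thus ?thesis using True i unfolding vfst_def by auto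
  next
    case False
    have "vsnd p q z $ (i - p) = 0" using assms(3) False i by auto
    thus ?thesis using False i unfolding vsnd_def by auto
  qed
qed (use assms in auto)

lemma hcat_carrier: "A \<in> carrier_mat m p \<Longrightarrow> B \<in> carrier_mat m q \<Longrightarrow> hcat A B \<in> carrier_mat m (p + q)"
  unfolding hcat_def by auto

lemma hcat_mult:
  assumes A: "A \<in> carrier_mat m p" and B: "B \<in> carrier_mat m q" and z: "z \<in> carrier_vec (p + q)"
  shows "hcat A B *\<^sub>v z = A *\<^sub>v vfst p z + B *\<^sub>v vsnd p q z"
proof (rule eq_vecI)
  fix r assume "r < dim_vec (A *\<^sub>v vfst p z + B *\<^sub>v vsnd p q z)"
  hence r: "r < m" using A B by auto
  have "(hcat A B *\<^sub>v z) $ r = (\<Sum>c = 0..<p + q. hcat A B $$ (r, c) * z $ c)"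
    using r A B z hcat_carrier[OF A B] by (auto simp: scalar_prod_def row_def)
  also have "\<dots> = (\<Sum>c = 0..<p. hcat A B $$ (r, c) * z $ c) + (\<Sum>c = p..<p + q. hcat A B $$ (r, c) * z $ c)"
    by (simp add: sum.atLeastLessThan_concat)
  also have "(\<Sum>c = 0..<p. hcat A B $$ (r, c) * z $ c) = (\<Sum>c = 0..<p. A $$ (r, c) * z $ c)"
    using r A B by (intro sum.cong) (auto simp: hcat_def)
  also have "(\<Sum>c = p..<p + q. hcat A B $$ (r, c) * z $ c) = (\<Sum>c = 0..<q. hcat A B $$ (r, c + p) * z $ (c + p))"
    using sum.shift_bounds_nat_ivl[of "\<lambda>c. hcat A B $$ (r, c) * z $ c" 0 p q] by (simp add: add.commute)
  also have "\<dots> = (\<Sum>c = 0..<q. B $$ (r, c) * z $ (p + c))"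
    using r A B by (intro sum.cong) (auto simp: hcat_def add.commute)
  finally show "(hcat A B *\<^sub>v z) $ r = (A *\<^sub>v vfst p z + B *\<^sub>v vsnd p q z) $ r"
    using r A B by (auto simp: scalar_prod_def row_def vfst_def vsnd_def)
qed (use A B hcat_carrier[OF A B] in auto)

lemma top_rows_carrier: "Z \<in> carrier_mat n r \<Longrightarrow> top_rows p Z \<in> carrier_mat p r"
  unfolding top_rows_def by auto

lemma top_rows_mult:
  assumes Z: "Z \<in> carrier_mat (p + q) r" and u: "u \<in> carrier_vec r"
  shows "top_rows p Z *\<^sub>v u = vfst p (Z *\<^sub>v u)"
  by (rule eq_vecI) (use Z u in \<open>auto simp: top_rows_def vfst_def scalar_prod_def row_def\<close>)



lemma mat_vec_uminus:
  fixes B :: "real mat"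
  assumes B: "B \<in> carrier_mat m q" and y: "y \<in> carrier_vec q"
  shows "B *\<^sub>v (- y) = - (B *\<^sub>v y)"
  by (rule eq_vecI) (use B y in \<open>auto simp: scalar_prod_def sum_negf[symmetric]\<close>)

lemma kern_in:
  fixes A B :: "real mat"
  assumes A: "A \<in> carrier_mat m p" and B: "B \<in> carrier_mat m q"
    and x: "x \<in> carrier_vec p" and y: "y \<in> carrier_vec q" and e: "A *\<^sub>v x = B *\<^sub>v y"
  shows "vapp p q x (- y) \<in> mat_kernel (hcat A B)"
proof -
  have my: "- y \<in> carrier_vec q" using y by auto
  have "hcat A B *\<^sub>v vapp p q x (- y) = A *\<^sub>v x + B *\<^sub>v (- y)"
    using hcat_mult[OF A B vapp_carrier] x my by simp
  also have "\<dots> = 0\<^sub>v m"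
    unfolding mat_vec_uminus[OF B y] e by (rule eq_vecI) (use B y in auto)
  finally show ?thesis
    by (intro mat_kernelI[OF hcat_carrier[OF A B]]) auto
qed

lemma kern_out:
  fixes A B :: "real mat"
  assumes A: "A \<in> carrier_mat m p" and B: "B \<in> carrier_mat m q"
    and z: "z \<in> mat_kernel (hcat A B)"
  shows "z \<in> carrier_vec (p + q)" "A *\<^sub>v vfst p z = B *\<^sub>v (- vsnd p q z)"
proof -
  show zc: "z \<in> carrier_vec (p + q)" using mat_kernelD[OF hcat_carrier[OF A B] z] by auto
  have "A *\<^sub>v vfst p z + B *\<^sub>v vsnd p q z = 0\<^sub>v m"
    using mat_kernelD[OF hcat_carrier[OF A B] z] hcat_mult[OF A B zc] by auto
  hence "\<And>i. i < m \<Longrightarrow> (A *\<^sub>v vfst p z) $ i + (B *\<^sub>v vsnd p q z) $ i = 0"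
  proof -
    fix i assume i: "i < m"
    assume eq: "A *\<^sub>v vfst p z + B *\<^sub>v vsnd p q z = 0\<^sub>v m"
    have "(A *\<^sub>v vfst p z + B *\<^sub>v vsnd p q z) $ i = 0" unfolding eq using i by simp
    thus "(A *\<^sub>v vfst p z) $ i + (B *\<^sub>v vsnd p q z) $ i = 0" using i B by simp
  qed
  thus "A *\<^sub>v vfst p z = B *\<^sub>v (- vsnd p q z)"
    unfolding mat_vec_uminus[OF B vsnd_carrier]
    by (intro eq_vecI) (use A B in \<open>auto simp: add_eq_0_iff\<close>)
qed

definition inv_on :: "real mat \<Rightarrow> real mat \<Rightarrow> real vec set \<Rightarrow> bool" where
  "inv_on A0 B0 S \<longleftrightarrow> (\<forall>v\<in>S. \<exists>w\<in>S. A0 *\<^sub>v v = B0 *\<^sub>v w)"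

lemma ssd_loop_props:
  assumes "ssd_loop A B C R"
  shows "\<And>A0 B0 m n p. A0 \<in> carrier_mat m n \<Longrightarrow> B0 \<in> carrier_mat m n \<Longrightarrow> full_col_rank B0 \<Longrightarrow>
    C \<in> carrier_mat n p \<Longrightarrow> full_col_rank C \<Longrightarrow> A = A0 * C \<Longrightarrow> B = B0 * C \<Longrightarrow>
    R \<in> carrier_mat n (dim_col R) \<and> full_col_rank R \<and> inv_on A0 B0 (colspace R) \<and>
    (\<forall>T. T \<subseteq> colspace C \<longrightarrow> inv_on A0 B0 T \<longrightarrow> T \<subseteq> colspace R)"
  using assms
proof (induction rule: ssd_loop.induct)
  case (trivial A B C)
  have Ac: "A \<in> carrier_mat m p" and Bc: "B \<in> carrier_mat m p" using trivial by auto
  have max: "T \<subseteq> colspace (0\<^sub>m (dim_row C) 0)" if T: "T \<subseteq> colspace C" "inv_on A0 B0 T" for T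
  proof
    fix v assume v: "v \<in> T"
    then obtain w where w: "w \<in> T" "A0 *\<^sub>v v = B0 *\<^sub>v w" using T(2) unfolding inv_on_def by auto
    obtain x where x: "x \<in> carrier_vec p" "v = C *\<^sub>v x" using T(1) v trivial(5) unfolding colspace_def by auto
    obtain y where y: "y \<in> carrier_vec p" "w = C *\<^sub>v y" using T(1) w trivial(5) unfolding colspace_def by auto
    have "A *\<^sub>v x = B *\<^sub>v y" using w x y trivial by auto
    from kern_in[OF Ac Bc x(1) y(1) this] have "vapp p p x (- y) = 0\<^sub>v (p + p)"
      using trivial(1) Ac Bc by auto
    hence "x = 0\<^sub>v p" using vfst_vapp[OF x(1), of p "- y"] by (auto simp: vfst_def)
    hence "v = 0\<^sub>v n" using x trivial by auto
    thus "v \<in> colspace (0\<^sub>m (dim_row C) 0)" using colspace_zero_cols trivial by auto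
  qed
  have "inv_on A0 B0 (colspace (0\<^sub>m (dim_row C) 0))"
    unfolding inv_on_def colspace_zero_cols using trivial by auto
  moreover have "full_col_rank (0\<^sub>m (dim_row C) 0)" unfolding full_col_rank_def by auto
  ultimately show ?case using max trivial by auto
next
  case (stop A B Z C)
  have Ac: "A \<in> carrier_mat m p" and Bc: "B \<in> carrier_mat m p" using stop by auto
  have fB: "full_col_rank B" using fcr_mult stop by auto
  define r where "r = dim_col Z"
  have Zc: "Z \<in> carrier_mat (p + p) r" using stop Ac Bc unfolding is_basis_mat_def r_def by auto
  have fZ: "full_col_rank Z" and cZ: "colspace Z = mat_kernel (hcat A B)"
    using stop unfolding is_basis_mat_def by auto
  define ZA where "ZA = top_rows p Z"
  have ZAc: "ZA \<in> carrier_mat p r" unfolding ZA_def using top_rows_carrier[OF Zc] .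
  have fZA: "full_col_rank ZA"
    unfolding full_col_rank_def
  proof (intro ballI impI)
    fix u assume u: "u \<in> carrier_vec (dim_col ZA)" and e: "ZA *\<^sub>v u = 0\<^sub>v (dim_row ZA)"
    have u': "u \<in> carrier_vec r" using u ZAc by auto
    have zk: "Z *\<^sub>v u \<in> mat_kernel (hcat A B)" using cZ u' Zc unfolding colspace_def by auto
    have f0: "vfst p (Z *\<^sub>v u) = 0\<^sub>v p" using e top_rows_mult[OF Zc u'] ZAc unfolding ZA_def by auto
    have "B *\<^sub>v (- vsnd p p (Z *\<^sub>v u)) = 0\<^sub>v m"
    proof -
      have "A *\<^sub>v 0\<^sub>v p = 0\<^sub>v m" by (rule eq_vecI) (use Ac in auto)
      thus ?thesis using kern_out(2)[OF Ac Bc zk] f0 by auto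
    qed
    moreover have "dim_col B = p" "dim_row B = m" using Bc by auto
    ultimately have "- vsnd p p (Z *\<^sub>v u) = 0\<^sub>v p" using fcr_D[OF fB, of "- vsnd p p (Z *\<^sub>v u)"] by simp
    hence s0: "vsnd p p (Z *\<^sub>v u) = 0\<^sub>v p" using uminus_zero_vec_eq[of "vsnd p p (Z *\<^sub>v u)" p] vsnd_carrier by blast
    have "dim_vec (Z *\<^sub>v u) = p + p" using Zc by simp
    hence zc: "Z *\<^sub>v u \<in> carrier_vec (p + p)" by (rule carrier_vecI)
    have "Z *\<^sub>v u = 0\<^sub>v (p + p)" using vec_split_zero[OF zc f0 s0] .
    thus "u = 0\<^sub>v (dim_col ZA)" using fcr_D[OF fZ] u' Zc ZAc by auto
  qed
  have sound: "inv_on A0 B0 (colspace C)"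
    unfolding inv_on_def
  proof
    fix v assume "v \<in> colspace C"
    then obtain x where x: "x \<in> carrier_vec p" "v = C *\<^sub>v x" using stop unfolding colspace_def by auto
    have le: "p \<le> r" using stop(3) Ac r_def by simp
    obtain u where u: "u \<in> carrier_vec r" "ZA *\<^sub>v u = x"
      using fcr_surj[OF ZAc le fZA x(1)] by blast
    have zk: "Z *\<^sub>v u \<in> mat_kernel (hcat A B)" using cZ u Zc unfolding colspace_def by auto
    have xz: "vfst p (Z *\<^sub>v u) = x" using u top_rows_mult[OF Zc u(1)] unfolding ZA_def by auto
    define y where "y = - vsnd p p (Z *\<^sub>v u)"
    have y: "y \<in> carrier_vec p" unfolding y_def by auto
    have "A *\<^sub>v x = B *\<^sub>v y" using kern_out(2)[OF Ac Bc zk] xz y_def by auto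
    hence "A0 *\<^sub>v v = B0 *\<^sub>v (C *\<^sub>v y)" using stop x y by auto
    moreover have "C *\<^sub>v y \<in> colspace C" using y stop unfolding colspace_def by auto
    ultimately show "\<exists>w\<in>colspace C. A0 *\<^sub>v v = B0 *\<^sub>v w" by auto
  qed
  show ?case using sound stop by auto
next
  case (step A B Z C R)
  have Ac: "A \<in> carrier_mat m p" and Bc: "B \<in> carrier_mat m p" using step by auto
  have fB: "full_col_rank B" using fcr_mult step by auto
  define r where "r = dim_col Z"
  have Zc: "Z \<in> carrier_mat (p + p) r" using step Ac Bc unfolding is_basis_mat_def r_def by auto
  have fZ: "full_col_rank Z" and cZ: "colspace Z = mat_kernel (hcat A B)"
    using step unfolding is_basis_mat_def by auto
  define ZA where "ZA = top_rows p Z"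
  have ZAc: "ZA \<in> carrier_mat p r" unfolding ZA_def using top_rows_carrier[OF Zc] .
  have fZA: "full_col_rank ZA"
    unfolding full_col_rank_def
  proof (intro ballI impI)
    fix u assume u: "u \<in> carrier_vec (dim_col ZA)" and e: "ZA *\<^sub>v u = 0\<^sub>v (dim_row ZA)"
    have u': "u \<in> carrier_vec r" using u ZAc by auto
    have zk: "Z *\<^sub>v u \<in> mat_kernel (hcat A B)" using cZ u' Zc unfolding colspace_def by auto
    have f0: "vfst p (Z *\<^sub>v u) = 0\<^sub>v p" using e top_rows_mult[OF Zc u'] ZAc unfolding ZA_def by auto
    have "B *\<^sub>v (- vsnd p p (Z *\<^sub>v u)) = 0\<^sub>v m"
    proof -
      have "A *\<^sub>v 0\<^sub>v p = 0\<^sub>v m" by (rule eq_vecI) (use Ac in auto)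
      thus ?thesis using kern_out(2)[OF Ac Bc zk] f0 by auto
    qed
    moreover have "dim_col B = p" "dim_row B = m" using Bc by auto
    ultimately have "- vsnd p p (Z *\<^sub>v u) = 0\<^sub>v p" using fcr_D[OF fB, of "- vsnd p p (Z *\<^sub>v u)"] by simp
    hence s0: "vsnd p p (Z *\<^sub>v u) = 0\<^sub>v p" using uminus_zero_vec_eq[of "vsnd p p (Z *\<^sub>v u)" p] vsnd_carrier by blast
    have "dim_vec (Z *\<^sub>v u) = p + p" using Zc by simp
    hence zc: "Z *\<^sub>v u \<in> carrier_vec (p + p)" by (rule carrier_vecI)
    have "Z *\<^sub>v u = 0\<^sub>v (p + p)" using vec_split_zero[OF zc f0 s0] .
    thus "u = 0\<^sub>v (dim_col ZA)" using fcr_D[OF fZ] u' Zc ZAc by auto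
  qed
  have dA: "dim_col A = p" using Ac by auto
  have C'c: "C * ZA \<in> carrier_mat n r" using step ZAc by auto
  have fC': "full_col_rank (C * ZA)" using fcr_mult[OF _ ZAc _ fZA] step by auto
  have eA: "A * top_rows (dim_col A) Z = A0 * (C * ZA)" unfolding dA ZA_def[symmetric]
    using step ZAc by (simp add: assoc_mult_mat)
  have eB: "B * top_rows (dim_col A) Z = B0 * (C * ZA)" unfolding dA ZA_def[symmetric]
    using step ZAc by (simp add: assoc_mult_mat)
  have IH: "R \<in> carrier_mat n (dim_col R) \<and> full_col_rank R \<and> inv_on A0 B0 (colspace R) \<and>
    (\<forall>T. T \<subseteq> colspace (C * ZA) \<longrightarrow> inv_on A0 B0 T \<longrightarrow> T \<subseteq> colspace R)"
  proof -
    have tZ: "top_rows (dim_col A) Z = ZA" unfolding dA ZA_def ..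
    have eA': "A * ZA = A0 * (C * ZA)" using eA unfolding tZ .
    have eB': "B * ZA = B0 * (C * ZA)" using eB unfolding tZ .
    show ?thesis using step.IH[unfolded tZ, OF step.prems(1,2,3) C'c fC' eA' eB'] .
  qed
  have max: "T \<subseteq> colspace (C * ZA)" if T: "T \<subseteq> colspace C" "inv_on A0 B0 T" for T
  proof
    fix v assume v: "v \<in> T"
    then obtain w where w: "w \<in> T" "A0 *\<^sub>v v = B0 *\<^sub>v w" using T(2) unfolding inv_on_def by auto
    obtain x where x: "x \<in> carrier_vec p" "v = C *\<^sub>v x" using T(1) v step unfolding colspace_def by auto
    obtain y where y: "y \<in> carrier_vec p" "w = C *\<^sub>v y" using T(1) w step unfolding colspace_def by auto
    have "A *\<^sub>v x = B *\<^sub>v y" using w x y step by auto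
    from kern_in[OF Ac Bc x(1) y(1) this] have "vapp p p x (- y) \<in> colspace Z" using cZ by auto
    then obtain u where u: "u \<in> carrier_vec r" "vapp p p x (- y) = Z *\<^sub>v u"
      using Zc unfolding colspace_def by auto
    have "ZA *\<^sub>v u = x" using top_rows_mult[OF Zc u(1)] u(2)[symmetric] x(1) unfolding ZA_def by simp
    hence "v = (C * ZA) *\<^sub>v u" using x u step ZAc by auto
    moreover have "dim_col (C * ZA) = r" using ZAc by simp
    ultimately show "v \<in> colspace (C * ZA)" using u unfolding colspace_def by auto
  qed
  show ?case using IH max by blast
qed



lemma mat_vec_zero: "(A :: real mat) \<in> carrier_mat m n \<Longrightarrow> A *\<^sub>v 0\<^sub>v n = 0\<^sub>v m"
  by (rule eq_vecI) auto

lemma fcrD':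
  assumes "full_col_rank A" "A \<in> carrier_mat m n" "x \<in> carrier_vec n" "A *\<^sub>v x = 0\<^sub>v m"
  shows "x = 0\<^sub>v n"
  using fcr_D[OF assms(1), of x] assms(2-4) by auto

lemma colspace_one: "colspace (1\<^sub>m n :: real mat) = carrier_vec n"
  unfolding colspace_def by force

lemma fcr_one: "full_col_rank (1\<^sub>m n :: real mat)"
  unfolding full_col_rank_def by auto

lemma fcr_inj:
  fixes A :: "real mat"
  assumes A: "A \<in> carrier_mat m n" and f: "full_col_rank A"
    and w: "w \<in> carrier_vec n" and w': "w' \<in> carrier_vec n" and e: "A *\<^sub>v w = A *\<^sub>v w'"
  shows "w = w'"
proof -
  have "A *\<^sub>v (w - w') = A *\<^sub>v w - A *\<^sub>v w'" by (rule mult_minus_distrib_mat_vec[OF A w w'])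
  also have "\<dots> = 0\<^sub>v m" unfolding e by (rule eq_vecI) (use A in auto)
  finally have "w - w' = 0\<^sub>v n" using fcr_D[OF f, of "w - w'"] A w w' by auto
  hence "\<And>i. i < n \<Longrightarrow> w $ i - w' $ i = 0" using w w'
    by (metis carrier_vecD index_minus_vec(1) index_zero_vec(1))
  thus ?thesis using w w' by (intro eq_vecI) auto
qed

lemma row_pair_eq:
  fixes A B A' B' :: "real mat"
  assumes rp: "(row A r, row B r) \<in> row_pairs A' B'" and r: "r < dim_row A" "r < dim_row B"
    and A': "A' \<in> carrier_mat m' n" and B': "B' \<in> carrier_mat m' n"
    and e: "A' *\<^sub>v v = B' *\<^sub>v w"
  shows "(A *\<^sub>v v) $ r = (B *\<^sub>v w) $ r"
proof -
  obtain r' where r': "r' < dim_row A'" "row A r = row A' r'" "row B r = row B' r'"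
    using rp unfolding row_pairs_def by auto
  have "(A *\<^sub>v v) $ r = row A' r' \<bullet> v" using r r' by auto
  also have "\<dots> = (A' *\<^sub>v v) $ r'" using r' by auto
  also have "\<dots> = (B' *\<^sub>v w) $ r'" using e by simp
  also have "\<dots> = row B r \<bullet> w" using r' A' B' by auto
  also have "\<dots> = (B *\<^sub>v w) $ r" using r by auto
  finally show ?thesis .
qed

lemma transfer_sub:
  fixes A B A' B' :: "real mat"
  assumes sub: "row_pairs A B \<subseteq> row_pairs A' B'"
    and A: "A \<in> carrier_mat m n" and B: "B \<in> carrier_mat m n"
    and A': "A' \<in> carrier_mat m' n" and B': "B' \<in> carrier_mat m' n"
    and e: "A' *\<^sub>v v = B' *\<^sub>v w"
  shows "A *\<^sub>v v = B *\<^sub>v w"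
proof (rule eq_vecI)
  fix r assume "r < dim_vec (B *\<^sub>v w)"
  hence r: "r < m" using B by auto
  have "(row A r, row B r) \<in> row_pairs A B" using r A unfolding row_pairs_def by auto
  thus "(A *\<^sub>v v) $ r = (B *\<^sub>v w) $ r"
    using row_pair_eq[OF _ _ _ A' B' e] sub r A B by auto
qed (use A B in auto)

locale pssd_ctx =
  fixes Nd M :: nat and DX DY DXs DYs :: "real mat"
    and DXl DYl :: "nat \<Rightarrow> real mat" and E :: "nat \<Rightarrow> nat \<Rightarrow> bool"
    and C :: "nat \<Rightarrow> nat \<Rightarrow> real mat" and Cssd :: "real mat"
  assumes DXc: "DX \<in> carrier_mat (dim_row DX) Nd" and DYc: "DY \<in> carrier_mat (dim_row DX) Nd"
    and fDX: "full_col_rank DX" and fDY: "full_col_rank DY"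
    and loc: "\<forall>a < M. DXl a \<in> carrier_mat (dim_row (DXl a)) Nd \<and> DYl a \<in> carrier_mat (dim_row (DXl a)) Nd"
    and cover: "(\<Union>a \<in> {..<M}. row_pairs (DXl a) (DYl a)) = row_pairs DX DY"
    and DXsc: "DXs \<in> carrier_mat (dim_row DXs) Nd" and DYsc: "DYs \<in> carrier_mat (dim_row DXs) Nd"
    and fDXs: "full_col_rank DXs" and fDYs: "full_col_rank DYs"
    and sig: "\<forall>a < M. row_pairs DXs DYs \<subseteq> row_pairs (DXl a) (DYl a)"
    and run: "pssd_run Nd M E DXl DYl C"
    and cs: "ssd DX DY Cssd"
begin

lemma locc: "a < M \<Longrightarrow> DXl a \<in> carrier_mat (dim_row (DXl a)) Nd" "a < M \<Longrightarrow> DYl a \<in> carrier_mat (dim_row (DXl a)) Nd"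
  using loc by auto

lemma fcr_loc: assumes a: "a < M" shows "full_col_rank (DXl a)" "full_col_rank (DYl a)"
proof -
  show "full_col_rank (DXl a)" unfolding full_col_rank_def
  proof (intro ballI impI)
    fix v assume v: "v \<in> carrier_vec (dim_col (DXl a))" and e: "DXl a *\<^sub>v v = 0\<^sub>v (dim_row (DXl a))"
    have "DXl a *\<^sub>v v = DYl a *\<^sub>v 0\<^sub>v Nd" using e mat_vec_zero[OF locc(2)[OF a]] by auto
    from transfer_sub[OF sig[rule_format, OF a] DXsc DYsc locc[OF a] this]
    have eq: "DXs *\<^sub>v v = 0\<^sub>v (dim_row DXs)" using mat_vec_zero[OF DYsc] by auto
    have d: "dim_col (DXl a) = Nd" using locc(1)[OF a] by auto
    have vN: "v \<in> carrier_vec Nd" using v d by simp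
    have "v = 0\<^sub>v Nd" by (rule fcrD'[OF fDXs DXsc vN eq])
    thus "v = 0\<^sub>v (dim_col (DXl a))" unfolding d .
  qed
  show "full_col_rank (DYl a)" unfolding full_col_rank_def
  proof (intro ballI impI)
    fix v assume v: "v \<in> carrier_vec (dim_col (DYl a))" and e: "DYl a *\<^sub>v v = 0\<^sub>v (dim_row (DYl a))"
    have r: "dim_row (DYl a) = dim_row (DXl a)" using locc(2)[OF a] by simp
    have "DXl a *\<^sub>v 0\<^sub>v Nd = DYl a *\<^sub>v v" unfolding e mat_vec_zero[OF locc(1)[OF a]] r ..
    from transfer_sub[OF sig[rule_format, OF a] DXsc DYsc locc[OF a] this]
    have eq: "DYs *\<^sub>v v = 0\<^sub>v (dim_row DXs)" unfolding mat_vec_zero[OF DXsc] by simp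
    have d: "dim_col (DYl a) = Nd" using locc(2)[OF a] by auto
    have vN: "v \<in> carrier_vec Nd" using v d by simp
    have "v = 0\<^sub>v Nd" by (rule fcrD'[OF fDYs DYsc vN eq])
    thus "v = 0\<^sub>v (dim_col (DYl a))" unfolding d .
  qed
qed

definition Sstar where "Sstar = colspace Cssd"

lemma Cssd_props:
  "Cssd \<in> carrier_mat Nd (dim_col Cssd)" "inv_on DX DY Sstar"
  "\<And>T. T \<subseteq> carrier_vec Nd \<Longrightarrow> inv_on DX DY T \<Longrightarrow> T \<subseteq> Sstar"
proof -
  have "ssd_loop DX DY (1\<^sub>m Nd) Cssd" using cs DXc unfolding ssd_def by auto
  moreover have e1: "DX = DX * 1\<^sub>m Nd" using DXc by simp
  moreover have e2: "DY = DY * 1\<^sub>m Nd" using DYc by simp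
  ultimately
  have P: "Cssd \<in> carrier_mat Nd (dim_col Cssd) \<and> full_col_rank Cssd \<and> inv_on DX DY (colspace Cssd) \<and>
    (\<forall>T. T \<subseteq> colspace (1\<^sub>m Nd) \<longrightarrow> inv_on DX DY T \<longrightarrow> T \<subseteq> colspace Cssd)"
    by (rule ssd_loop_props[OF _ DXc DYc fDY one_carrier_mat fcr_one])
  thus "Cssd \<in> carrier_mat Nd (dim_col Cssd)" "inv_on DX DY Sstar"
    "\<And>T. T \<subseteq> carrier_vec Nd \<Longrightarrow> inv_on DX DY T \<Longrightarrow> T \<subseteq> Sstar"
    unfolding Sstar_def colspace_one by auto
qed

lemma Sstar_carrier: "Sstar \<subseteq> carrier_vec Nd"
  unfolding Sstar_def using colspace_carrier[OF Cssd_props(1)] .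

lemma inv_global_local:
  assumes T: "T \<subseteq> carrier_vec Nd" and i: "inv_on DX DY T" and a: "a < M"
  shows "inv_on (DXl a) (DYl a) T"
  unfolding inv_on_def
proof
  fix v assume "v \<in> T"
  then obtain w where w: "w \<in> T" "DX *\<^sub>v v = DY *\<^sub>v w" using i unfolding inv_on_def by auto
  have "row_pairs (DXl a) (DYl a) \<subseteq> row_pairs DX DY" using cover a by auto
  from transfer_sub[OF this locc[OF a] DXc DYc w(2)]
  show "\<exists>w\<in>T. DXl a *\<^sub>v v = DYl a *\<^sub>v w" using w by auto
qed

lemma inv_local_global:
  assumes T: "T \<subseteq> carrier_vec Nd"
    and h: "\<forall>v\<in>T. \<exists>w\<in>T. \<forall>a<M. DXl a *\<^sub>v v = DYl a *\<^sub>v w"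
  shows "inv_on DX DY T"
  unfolding inv_on_def
proof
  fix v assume "v \<in> T"
  then obtain w where w: "w \<in> T" "\<forall>a<M. DXl a *\<^sub>v v = DYl a *\<^sub>v w" using h by auto
  have "DX *\<^sub>v v = DY *\<^sub>v w"
  proof (rule eq_vecI)
    fix r assume "r < dim_vec (DY *\<^sub>v w)"
    hence r: "r < dim_row DX" using DYc by auto
    have "(row DX r, row DY r) \<in> row_pairs DX DY" using r unfolding row_pairs_def by auto
    then obtain a where a: "a < M" "(row DX r, row DY r) \<in> row_pairs (DXl a) (DYl a)"
      using cover by auto
    have r2: "r < dim_row DY" using r DYc by simp
    have ea: "DXl a *\<^sub>v v = DYl a *\<^sub>v w" using w(2) a(1) by blast
    show "(DX *\<^sub>v v) $ r = (DY *\<^sub>v w) $ r"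
      by (rule row_pair_eq[OF a(2) r r2 locc[OF a(1)] ea])
  next
    have dY: "dim_row DY = dim_row DX" by (rule carrier_matD(1)[OF DYc])
    show "dim_vec (DX *\<^sub>v v) = dim_vec (DY *\<^sub>v w)" by (simp add: dY)
  qed
  thus "\<exists>w\<in>T. DX *\<^sub>v v = DY *\<^sub>v w" using w(1) by blast
qed

lemma sig_unique:
  assumes a: "a < M" and b: "b < M" and v: "v \<in> carrier_vec Nd" and w: "w \<in> carrier_vec Nd"
    and w': "w' \<in> carrier_vec Nd"
    and e1: "DXl a *\<^sub>v v = DYl a *\<^sub>v w" and e2: "DXl b *\<^sub>v v = DYl b *\<^sub>v w'"
  shows "w = w'"
proof -
  have "DXs *\<^sub>v v = DYs *\<^sub>v w" using transfer_sub[OF sig[rule_format, OF a] DXsc DYsc locc[OF a] e1] .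
  moreover have "DXs *\<^sub>v v = DYs *\<^sub>v w'" using transfer_sub[OF sig[rule_format, OF b] DXsc DYsc locc[OF b] e2] .
  ultimately have "DYs *\<^sub>v w = DYs *\<^sub>v w'" by simp
  thus ?thesis by (rule fcr_inj[OF DYsc fDYs w w'])
qed

end


context pssd_ctx begin

definition INV where "INV k \<longleftrightarrow> (\<forall>j<M. C k j \<in> carrier_mat Nd (dim_col (C k j)) \<and>
   full_col_rank (C k j) \<and> Sstar \<subseteq> colspace (C k j))"

lemma step_lemma:
  assumes k: "k \<ge> 1" and i: "i < M" and inv: "INV (k - 1)"
  shows "C k i \<in> carrier_mat Nd (dim_col (C k i)) \<and> full_col_rank (C k i) \<and> Sstar \<subseteq> colspace (C k i) \<and>
    (\<forall>j \<in> insert i (in_nbrs M E i). colspace (C k i) \<subseteq> colspace (C (k - 1) j)) \<and>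
    inv_on (DXl i) (DYl i) (colspace (C k i))"
proof -
  define I where "I = (\<Inter>j \<in> insert i (in_nbrs M E i). colspace (C (k - 1) j))"
  obtain Dk Ek where Dk: "is_basis_mat Nd Dk I" and Ek: "ssd (DXl i * Dk) (DYl i * Dk) Ek"
    and Ck: "C k i = (if dim_col (Dk * Ek) < dim_col (C (k - 1) i) then Dk * Ek else C (k - 1) i)"
    using run k i unfolding pssd_run_def I_def by blast
  have nb: "\<And>j. j \<in> insert i (in_nbrs M E i) \<Longrightarrow> j < M" using i unfolding in_nbrs_def by auto
  define d where "d = dim_col Dk"
  have Dk': "dim_row Dk = Nd \<and> colspace Dk = I \<and> full_col_rank Dk" using Dk unfolding is_basis_mat_def .
  have Dkc: "Dk \<in> carrier_mat Nd d" unfolding d_def using Dk' by (intro carrier_matI) simp_all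
  have cDk: "colspace Dk = I" and fDk: "full_col_rank Dk" using Dk' by simp_all
  define m where "m = dim_row (DXl i)"
  have Xc: "DXl i \<in> carrier_mat m Nd" using locc(1)[OF i] unfolding m_def .
  have Yc: "DYl i \<in> carrier_mat m Nd" using locc(2)[OF i] unfolding m_def .
  have A0c: "DXl i * Dk \<in> carrier_mat m d" by (rule mult_carrier_mat[OF Xc Dkc])
  have B0c: "DYl i * Dk \<in> carrier_mat m d" by (rule mult_carrier_mat[OF Yc Dkc])
  have fB0: "full_col_rank (DYl i * Dk)" using fcr_mult[OF Yc Dkc fcr_loc(2)[OF i] fDk] .
  have "ssd_loop (DXl i * Dk) (DYl i * Dk) (1\<^sub>m d) Ek" using Ek A0c unfolding ssd_def by auto
  moreover have e1: "DXl i * Dk = (DXl i * Dk) * 1\<^sub>m d" by (rule right_mult_one_mat[OF A0c, symmetric])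
  moreover have e2: "DYl i * Dk = (DYl i * Dk) * 1\<^sub>m d" by (rule right_mult_one_mat[OF B0c, symmetric])
  ultimately
  have P: "Ek \<in> carrier_mat d (dim_col Ek) \<and> full_col_rank Ek \<and> inv_on (DXl i * Dk) (DYl i * Dk) (colspace Ek) \<and>
    (\<forall>T. T \<subseteq> colspace (1\<^sub>m d) \<longrightarrow> inv_on (DXl i * Dk) (DYl i * Dk) T \<longrightarrow> T \<subseteq> colspace Ek)"
    by (rule ssd_loop_props[OF _ A0c B0c fB0 one_carrier_mat fcr_one])
  define e where "e = dim_col Ek"
  have Ekc: "Ek \<in> carrier_mat d e" using P e_def by auto
  have fEk: "full_col_rank Ek" and invE: "inv_on (DXl i * Dk) (DYl i * Dk) (colspace Ek)"
    and maxE: "\<And>T. T \<subseteq> carrier_vec d \<Longrightarrow> inv_on (DXl i * Dk) (DYl i * Dk) T \<Longrightarrow> T \<subseteq> colspace Ek"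
    using P unfolding colspace_one by auto
  define DE where "DE = Dk * Ek"
  have DEc: "DE \<in> carrier_mat Nd e" using Dkc Ekc DE_def by auto
  have fDE: "full_col_rank DE" using fcr_mult[OF Dkc Ekc fDk fEk] DE_def by auto
  have subI: "colspace DE \<subseteq> I" using colspace_mult_sub[OF Dkc Ekc] cDk DE_def by auto
  have SI: "Sstar \<subseteq> I" using inv nb unfolding INV_def I_def by blast
  have SDE: "Sstar \<subseteq> colspace DE"
  proof
    fix s assume s: "s \<in> Sstar"
    define T where "T = {x \<in> carrier_vec d. Dk *\<^sub>v x \<in> Sstar}"
    have invT: "inv_on (DXl i * Dk) (DYl i * Dk) T"
      unfolding inv_on_def
    proof
      fix x assume x: "x \<in> T"
      hence xc: "x \<in> carrier_vec d" and xs: "Dk *\<^sub>v x \<in> Sstar" unfolding T_def by auto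
      obtain w where w: "w \<in> Sstar" "DXl i *\<^sub>v (Dk *\<^sub>v x) = DYl i *\<^sub>v w"
        using inv_global_local[OF Sstar_carrier Cssd_props(2) i] xs unfolding inv_on_def by blast
      have "w \<in> colspace Dk" using w SI cDk by auto
      then obtain y where y: "y \<in> carrier_vec d" "w = Dk *\<^sub>v y" using Dkc unfolding colspace_def by auto
      have "y \<in> T" using y w unfolding T_def by auto
      moreover have "(DXl i * Dk) *\<^sub>v x = (DYl i * Dk) *\<^sub>v y" using w y xc Xc Yc Dkc by auto
      ultimately show "\<exists>y\<in>T. (DXl i * Dk) *\<^sub>v x = (DYl i * Dk) *\<^sub>v y" by auto
    qed
    have TE: "T \<subseteq> colspace Ek" using maxE[OF _ invT] unfolding T_def by auto
    have "s \<in> colspace Dk" using s SI cDk by auto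
    then obtain x where x: "x \<in> carrier_vec d" "s = Dk *\<^sub>v x" using Dkc unfolding colspace_def by auto
    have "x \<in> T" using x s unfolding T_def by auto
    with TE obtain u where u: "u \<in> carrier_vec e" "x = Ek *\<^sub>v u" using Ekc unfolding colspace_def by auto
    have "s = DE *\<^sub>v u" using x u Dkc Ekc DE_def by auto
    thus "s \<in> colspace DE" using u DEc unfolding colspace_def by auto
  qed
  have invDE: "inv_on (DXl i) (DYl i) (colspace DE)"
    unfolding inv_on_def
  proof
    fix v assume "v \<in> colspace DE"
    then obtain u where u: "u \<in> carrier_vec e" "v = DE *\<^sub>v u" using DEc unfolding colspace_def by auto
    have xE: "Ek *\<^sub>v u \<in> colspace Ek" using u Ekc unfolding colspace_def by auto
    then obtain y where y: "y \<in> colspace Ek" "(DXl i * Dk) *\<^sub>v (Ek *\<^sub>v u) = (DYl i * Dk) *\<^sub>v y"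
      using invE unfolding inv_on_def by blast
    obtain u' where u': "u' \<in> carrier_vec e" "y = Ek *\<^sub>v u'" using y(1) Ekc unfolding colspace_def by auto
    have "DXl i *\<^sub>v v = DYl i *\<^sub>v (DE *\<^sub>v u')" using y u u' Xc Yc Dkc Ekc DE_def by auto
    moreover have "DE *\<^sub>v u' \<in> colspace DE" using u' DEc unfolding colspace_def by auto
    ultimately show "\<exists>w\<in>colspace DE. DXl i *\<^sub>v v = DYl i *\<^sub>v w" by auto
  qed
  have Cprev: "C (k - 1) i \<in> carrier_mat Nd (dim_col (C (k - 1) i))" "full_col_rank (C (k - 1) i)"
    using inv i unfolding INV_def by auto
  have eqDE: "colspace (C k i) = colspace DE"
  proof (cases "dim_col DE < dim_col (C (k - 1) i)")
    case True thus ?thesis using Ck DE_def by auto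
  next
    case False
    hence Ck': "C k i = C (k - 1) i" using Ck DE_def by auto
    have "colspace DE \<subseteq> colspace (C (k - 1) i)" using subI unfolding I_def by auto
    from colspace_eq_dim[OF DEc Cprev(1) fDE Cprev(2) this] False DEc
    have "colspace (C (k - 1) i) \<subseteq> colspace DE" by auto
    thus ?thesis using Ck' \<open>colspace DE \<subseteq> colspace (C (k - 1) i)\<close> by auto
  qed
  have CkP: "C k i \<in> carrier_mat Nd (dim_col (C k i)) \<and> full_col_rank (C k i)"
  proof (cases "dim_col DE < dim_col (C (k - 1) i)")
    case True
    have ce: "dim_col DE = e" by (rule carrier_matD(2)[OF DEc])
    have DEc': "DE \<in> carrier_mat Nd (dim_col DE)" unfolding ce by (rule DEc)
    have T': "dim_col (Dk * Ek) < dim_col (C (k - 1) i)" using True unfolding DE_def .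
    have ck: "C k i = DE" unfolding DE_def using Ck unfolding if_P[OF T'] .
    show ?thesis unfolding ck using DEc' fDE by (rule conjI)
  next
    case False
    have F': "\<not> dim_col (Dk * Ek) < dim_col (C (k - 1) i)" using False unfolding DE_def .
    have ck: "C k i = C (k - 1) i" using Ck unfolding if_not_P[OF F'] .
    show ?thesis unfolding ck using Cprev by (rule conjI)
  qed
  have nbf: "\<forall>j \<in> insert i (in_nbrs M E i). colspace DE \<subseteq> colspace (C (k - 1) j)"
  proof
    fix j assume j: "j \<in> insert i (in_nbrs M E i)"
    show "colspace DE \<subseteq> colspace (C (k - 1) j)" using subI j unfolding I_def by blast
  qed
  show ?thesis unfolding eqDE using CkP SDE invDE nbf by blast
qed

lemma INV_all: "INV k"
proof (induction k)
  case 0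
  have "C 0 j = 1\<^sub>m Nd" if "j < M" for j using run that unfolding pssd_run_def by auto
  thus ?case unfolding INV_def using Sstar_carrier fcr_one colspace_one by auto
next
  case (Suc k)
  thus ?case using step_lemma[of "Suc k"] unfolding INV_def by auto
qed

lemma step_all:
  assumes k: "k \<ge> 1" and i: "i < M"
  shows "C k i \<in> carrier_mat Nd (dim_col (C k i)) \<and> Sstar \<subseteq> colspace (C k i) \<and>
    (\<forall>j \<in> insert i (in_nbrs M E i). colspace (C k i) \<subseteq> colspace (C (k - 1) j)) \<and>
    inv_on (DXl i) (DYl i) (colspace (C k i))"
  using step_lemma[OF k i INV_all] by auto

lemma path_lemma:
  "(j, i) \<in> edge_rel M E ^^ n \<Longrightarrow> i < M \<Longrightarrow> n \<le> k \<Longrightarrow> colspace (C k i) \<subseteq> colspace (C (k - n) j)"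
proof (induction n arbitrary: i k)
  case 0 thus ?case by auto
next
  case (Suc n)
  then obtain m where m: "(j, m) \<in> edge_rel M E ^^ n" "(m, i) \<in> edge_rel M E" by auto
  have mM: "m < M" and Emi: "E m i" using m(2) unfolding edge_rel_def by auto
  have "m \<in> in_nbrs M E i" using mM Emi unfolding in_nbrs_def by auto
  hence "colspace (C k i) \<subseteq> colspace (C (k - 1) m)" using step_all[of k i] Suc.prems by auto
  also have "\<dots> \<subseteq> colspace (C (k - 1 - n) j)"
  proof -
    have "n \<le> k - 1" using Suc.prems(3) by simp
    thus ?thesis by (rule Suc.IH[OF m(1) mM])
  qed
  also have "k - 1 - n = k - Suc n" by simp
  finally show ?case .
qed

end


theorem theorem5p2:
  fixes Nd M :: nat and DX DY DXs DYs :: "real mat"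
    and DXl DYl :: "nat \<Rightarrow> real mat" and E :: "nat \<Rightarrow> nat \<Rightarrow> bool"
    and C :: "nat \<Rightarrow> nat \<Rightarrow> real mat" and Cssd :: "real mat" and i k :: nat
  assumes "M \<ge> 1"
    and "DX \<in> carrier_mat (dim_row DX) Nd" and "DY \<in> carrier_mat (dim_row DX) Nd"
    and "full_col_rank DX" and "full_col_rank DY"
    and "\<forall>a < M. DXl a \<in> carrier_mat (dim_row (DXl a)) Nd \<and> DYl a \<in> carrier_mat (dim_row (DXl a)) Nd"
    and "(\<Union>a \<in> {..<M}. row_pairs (DXl a) (DYl a)) = row_pairs DX DY"
    and "DXs \<in> carrier_mat (dim_row DXs) Nd" and "DYs \<in> carrier_mat (dim_row DXs) Nd"
    and "full_col_rank DXs" and "full_col_rank DYs"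
    and "\<forall>a < M. row_pairs DXs DYs \<subseteq> row_pairs (DXl a) (DYl a)"
    and "pssd_run Nd M E DXl DYl C"
    and "ssd DX DY Cssd"
    and "globally_reachable M E i"
    and "k \<ge> Max {dist M E j i | j. j < M} + 1"
  shows "colspace (C k i) = colspace Cssd"
proof -
  interpret P: pssd_ctx Nd M DX DY DXs DYs DXl DYl E C Cssd
    by (rule pssd_ctx.intro) (fact assms(2), fact assms(3), fact assms(4), fact assms(5), fact assms(6),
      fact assms(7), fact assms(8), fact assms(9), fact assms(10), fact assms(11), fact assms(12),
      fact assms(13), fact assms(14))
  have iM: "i < M" using assms(15) unfolding globally_reachable_def by auto
  define l where "l = Max {dist M E j i | j. j < M}"
  have fin: "finite {dist M E j i | j. j < M}" by simp
  have path: "(j, i) \<in> edge_rel M E ^^ dist M E j i \<and> dist M E j i \<le> l" if j: "j < M" for j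
  proof -
    have "(j, i) \<in> (edge_rel M E)\<^sup>*" using assms(15) j unfolding globally_reachable_def by auto
    then obtain n where "(j, i) \<in> edge_rel M E ^^ n" using rtrancl_power by blast
    hence "(j, i) \<in> edge_rel M E ^^ dist M E j i" unfolding dist_def by (rule LeastI)
    moreover have "dist M E j i \<le> l" unfolding l_def using fin j by (intro Max_ge) auto
    ultimately show ?thesis by auto
  qed
  have k1: "k \<ge> 1" and kl: "k \<ge> l + 1" using assms(16) l_def by auto
  define S where "S = colspace (C k i)"
  have Si: "C k i \<in> carrier_mat Nd (dim_col (C k i))" "P.Sstar \<subseteq> S" "inv_on (DXl i) (DYl i) S"
    using P.step_all[OF k1 iM] S_def by auto
  have Sc: "S \<subseteq> carrier_vec Nd" using colspace_carrier[OF Si(1)] S_def by auto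
  have U: "S \<subseteq> colspace (C (k - dist M E a i) a) \<and> inv_on (DXl a) (DYl a) (colspace (C (k - dist M E a i) a))
      \<and> colspace (C (k - dist M E a i) a) \<subseteq> carrier_vec Nd" if a: "a < M" for a
  proof -
    have p: "(a, i) \<in> edge_rel M E ^^ dist M E a i" "dist M E a i \<le> l" using path[OF a] by auto
    have "S \<subseteq> colspace (C (k - dist M E a i) a)" using P.path_lemma[OF p(1) iM] p(2) kl S_def by auto
    moreover have "k - dist M E a i \<ge> 1" using p(2) kl by auto
    note st = P.step_all[OF this a]
    ultimately show ?thesis using colspace_carrier[of "C (k - dist M E a i) a"] by auto
  qed
  have "inv_on DX DY S"
  proof (rule P.inv_local_global[OF Sc], intro ballI)
    fix v assume v: "v \<in> S"
    then obtain w where w: "w \<in> S" "DXl i *\<^sub>v v = DYl i *\<^sub>v w" using Si(3) unfolding inv_on_def by auto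
    have "\<forall>a<M. DXl a *\<^sub>v v = DYl a *\<^sub>v w"
    proof (intro allI impI)
      fix a assume a: "a < M"
      obtain w' where w': "w' \<in> colspace (C (k - dist M E a i) a)" "DXl a *\<^sub>v v = DYl a *\<^sub>v w'"
        using U[OF a] v unfolding inv_on_def by blast
      have "w = w'" using P.sig_unique[OF iM a _ _ _ w(2) w'(2)] v w w' Sc U[OF a] by auto
      thus "DXl a *\<^sub>v v = DYl a *\<^sub>v w" using w' by auto
    qed
    thus "\<exists>w\<in>S. \<forall>a<M. DXl a *\<^sub>v v = DYl a *\<^sub>v w" using w by auto
  qed
  hence "S \<subseteq> P.Sstar" using P.Cssd_props(3)[OF Sc] by auto
  thus ?thesis using Si(2) S_def P.Sstar_def by auto
qed


end
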